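(* Let $f$ satisfy Assumption A, $g$ satisfy Assumption B, and let $(u_k)_{k\ge0}$ be a sequence of proximal gradient iterates with parameter $L>0$ where $1/L>s_0$. Then for every $k\ge1$ and every $p\in[1,\infty)$, \[ \|u_{k+1}-u_k\|_{L^p(\Omega)}^p\ \ge\ \sigma(1/L)^p\,\|\chi_k-\chi_{k+1}\|_{L^1(\Omega)} , \] and $\sigma(1/L)>0$.
   Context: $\Omega\subset\mathbb{R}^n$ Lebesgue measurable with finite measure. Assumption A: $f:L^2(\Omega)\to\mathbb{R}$ bounded below, weakly lower semicontinuous, Fréchet differentiable, $\nabla f$ Lipschitz with constant $L_f$. Assumption B on $g:\mathbb{R}\to\mathbb{R}\cup\{+\infty\}$: (B1) lsc, symmetric, $g(0)=0$; (B2) $g(u)<\infty$ for some $u\ne0$; (B3) one of (B3a) $g$ twice differentiable on some $(0,\epsilon)$, $\limsup_{u\searrow0}g''(u)\in(-\infty,0)$; (B3b) same differentiability, $\lim_{u\searrow0}g''(u)=-\infty$; (B3c) $\liminf_{u\searrow0}g(u)>0$; (B4) $g\ge0$. $\operatorname{prox}_{sg}(q):=\operatorname{argmin}_{u\in\mathbb{R}}(\tfrac12|u-q|^2+sg(u))$. Constants: $s_0:=0$ if (B3b) or (B3c) holds, otherwise $s_0:=-1/\limsup_{u\searrow0}g''(u)$; for $s>0$, $\sigma(s):=\inf\{|u|:\ u\neq0,\ u\in\operatorname{prox}_{sg}(q)\text{ for some }q\in\mathbb{R}\}$. Proximal gradient iterates with parameter $L>0$: a sequence $(u_k)_{k\ge0}\subset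 L^2(\Omega)$ with arbitrary $u_0\in L^2(\Omega)$ such that for every $k\ge0$, $u_{k+1}$ is a global minimizer over $u\in L^2(\Omega)$ of $f(u_k)+\int_\Omega\nabla f(u_k)(u-u_k)\,dx+\frac L2\|u-u_k\|^2_{L^2(\Omega)}+\int_\Omega g(u(x))\,dx$. $I_k:=\{x\in\Omega: u_k(x)\ne0\}$ and $\chi_k$ is its characteristic function. *)

theory Defs
  imports "HOL-Analysis.Analysis"
begin

definition L2 :: "'a::euclidean_space set \<Rightarrow> ('a \<Rightarrow> real) set" where
  "L2 \<Omega> = {u. u \<in> borel_measurable (lebesgue_on \<Omega>) \<and>
                 integrable (lebesgue_on \<Omega>) (\<lambda>x. (u x)\<^sup>2)}"

definition L2norm :: "'a::euclidean_space set \<Rightarrow> ('a \<Rightarrow> real) \<Rightarrow> real" where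
  "L2norm \<Omega> u = sqrt (\<integral>x. (u x)\<^sup>2 \<partial>(lebesgue_on \<Omega>))"

definition L2inner :: "'a::euclidean_space set \<Rightarrow> ('a \<Rightarrow> real) \<Rightarrow> ('a \<Rightarrow> real) \<Rightarrow> real" where
  "L2inner \<Omega> u v = (\<integral>x. u x * v x \<partial>(lebesgue_on \<Omega>))"

text \<open>Assumption A, with Df the (Riesz representative of the) Frechet gradient of f.\<close>

definition assumptionA ::
  "'a::euclidean_space set \<Rightarrow> (('a \<Rightarrow> real) \<Rightarrow> real) \<Rightarrow> (('a \<Rightarrow> real) \<Rightarrow> ('a \<Rightarrow> real)) \<Rightarrow> real \<Rightarrow> bool" where
  "assumptionA \<Omega> f Df Lf \<longleftrightarrow>
     (\<exists>c. \<forall>u\<in>L2 \<Omega>. c \<le> f u) \<and>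
     (\<forall>w w0. (\<forall>k. w k \<in> L2 \<Omega>) \<and> w0 \<in> L2 \<Omega> \<and>
        (\<forall>\<phi>\<in>L2 \<Omega>. (\<lambda>k. L2inner \<Omega> (w k) \<phi>) \<longlonglongrightarrow> L2inner \<Omega> w0 \<phi>)
        \<longrightarrow> ereal (f w0) \<le> liminf (\<lambda>k. ereal (f (w k)))) \<and>
     (\<forall>u\<in>L2 \<Omega>. Df u \<in> L2 \<Omega> \<and>
        (\<forall>\<epsilon>>0. \<exists>\<delta>>0. \<forall>v\<in>L2 \<Omega>. L2norm \<Omega> (\<lambda>x. v x - u x) < \<delta> \<longrightarrow>
           \<bar>f v - f u - L2inner \<Omega> (Df u) (\<lambda>x. v x - u x)\<bar> \<le> \<epsilon> * L2norm \<Omega> (\<lambda>x. v x - u x))) \<and>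
     (\<forall>u\<in>L2 \<Omega>. \<forall>v\<in>L2 \<Omega>.
        L2norm \<Omega> (\<lambda>x. Df u x - Df v x) \<le> Lf * L2norm \<Omega> (\<lambda>x. u x - v x))"

definition greal :: "(real \<Rightarrow> ereal) \<Rightarrow> real \<Rightarrow> real" where
  "greal g t = real_of_ereal (g t)"

definition gsecond :: "(real \<Rightarrow> ereal) \<Rightarrow> real \<Rightarrow> real" where
  "gsecond g = deriv (deriv (greal g))"

definition twice_diff_near0 :: "(real \<Rightarrow> ereal) \<Rightarrow> bool" where
  "twice_diff_near0 g \<longleftrightarrow> (\<exists>\<epsilon>>0. \<forall>u\<in>{0<..<\<epsilon>}.
      \<bar>g u\<bar> \<noteq> \<infinity> \<and> greal g differentiable (at u) \<and> deriv (greal g) differentiable (at u))"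

definition B3a :: "(real \<Rightarrow> ereal) \<Rightarrow> bool" where
  "B3a g \<longleftrightarrow> twice_diff_near0 g \<and>
     Limsup (at_right 0) (\<lambda>u. ereal (gsecond g u)) \<in> {-\<infinity><..<0}"

definition B3b :: "(real \<Rightarrow> ereal) \<Rightarrow> bool" where
  "B3b g \<longleftrightarrow> twice_diff_near0 g \<and> filterlim (gsecond g) at_bot (at_right 0)"

definition B3c :: "(real \<Rightarrow> ereal) \<Rightarrow> bool" where
  "B3c g \<longleftrightarrow> Liminf (at_right 0) g > 0"

definition assumptionB :: "(real \<Rightarrow> ereal) \<Rightarrow> bool" where
  "assumptionB g \<longleftrightarrow>
     (\<forall>x X. X \<longlonglongrightarrow> x \<longrightarrow> g x \<le> liminf (\<lambda>k. g (X k))) \<and>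
     (\<forall>u. g (-u) = g u) \<and> g 0 = 0 \<and>
     (\<exists>u. u \<noteq> 0 \<and> g u < \<infinity>) \<and>
     (B3a g \<or> B3b g \<or> B3c g) \<and>
     (\<forall>u. g u \<ge> 0)"

definition s0 :: "(real \<Rightarrow> ereal) \<Rightarrow> real" where
  "s0 g = (if B3b g \<or> B3c g then 0
           else - 1 / real_of_ereal (Limsup (at_right 0) (\<lambda>u. ereal (gsecond g u))))"

definition prox :: "real \<Rightarrow> (real \<Rightarrow> ereal) \<Rightarrow> real \<Rightarrow> real set" where
  "prox s g q = {u. \<forall>v. ereal ((u - q)\<^sup>2 / 2) + ereal s * g u \<le> ereal ((v - q)\<^sup>2 / 2) + ereal s * g v}"

definition \<sigma> :: "(real \<Rightarrow> ereal) \<Rightarrow> real \<Rightarrow> real" where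
  "\<sigma> g s = Inf {\<bar>u\<bar> | u. u \<noteq> 0 \<and> (\<exists>q. u \<in> prox s g q)}"

definition pg_obj :: "'a::euclidean_space set \<Rightarrow> (('a \<Rightarrow> real) \<Rightarrow> real) \<Rightarrow> (('a \<Rightarrow> real) \<Rightarrow> ('a \<Rightarrow> real))
    \<Rightarrow> (real \<Rightarrow> ereal) \<Rightarrow> real \<Rightarrow> ('a \<Rightarrow> real) \<Rightarrow> ('a \<Rightarrow> real) \<Rightarrow> ereal" where
  "pg_obj \<Omega> f Df g L uk u =
     ereal (f uk + L2inner \<Omega> (Df uk) (\<lambda>x. u x - uk x) + L / 2 * (L2norm \<Omega> (\<lambda>x. u x - uk x))\<^sup>2)
     + enn2ereal (\<integral>\<^sup>+ x. e2ennreal (g (u x)) \<partial>(lebesgue_on \<Omega>))"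

definition prox_grad_iterates :: "'a::euclidean_space set \<Rightarrow> (('a \<Rightarrow> real) \<Rightarrow> real) \<Rightarrow> (('a \<Rightarrow> real) \<Rightarrow> ('a \<Rightarrow> real))
    \<Rightarrow> (real \<Rightarrow> ereal) \<Rightarrow> real \<Rightarrow> (nat \<Rightarrow> 'a \<Rightarrow> real) \<Rightarrow> bool" where
  "prox_grad_iterates \<Omega> f Df g L u \<longleftrightarrow>
     u 0 \<in> L2 \<Omega> \<and>
     (\<forall>k. u (Suc k) \<in> L2 \<Omega> \<and>
          (\<forall>v\<in>L2 \<Omega>. pg_obj \<Omega> f Df g L (u k) (u (Suc k)) \<le> pg_obj \<Omega> f Df g L (u k) v))"

definition chi :: "'a::euclidean_space set \<Rightarrow> ('a \<Rightarrow> real) \<Rightarrow> 'a \<Rightarrow> real" where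
  "chi \<Omega> v = indicator {x\<in>\<Omega>. v x \<noteq> 0}"

end

theory Submission
  imports Defs
begin


lemma prox_neg:
  assumes "\<forall>u. g (-u) = g u" "u \<in> prox s g q"
  shows "-u \<in> prox s g (-q)"
proof -
  have "\<And>v. ereal ((-u - -q)\<^sup>2 / 2) + ereal s * g (-u) \<le> ereal ((v - -q)\<^sup>2 / 2) + ereal s * g v"
  proof -
    fix v
    have "ereal ((u - q)\<^sup>2 / 2) + ereal s * g u \<le> ereal ((-v - q)\<^sup>2 / 2) + ereal s * g (-v)"
      using assms(2) unfolding prox_def by blast
    moreover have "(-u - -q)\<^sup>2 = (u - q)\<^sup>2" "(v - -q)\<^sup>2 = (-v - q)\<^sup>2" by algebra+
    ultimately show "ereal ((-u - -q)\<^sup>2 / 2) + ereal s * g (-u) \<le> ereal ((v - -q)\<^sup>2 / 2) + ereal s * g v"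
      using assms(1) by metis
  qed
  then show ?thesis unfolding prox_def by blast
qed

lemma g_ereal:
  assumes "g t \<noteq> \<infinity>" "g t \<ge> 0"
  shows "g t = ereal (greal g t)"
  using assms unfolding greal_def by (cases "g t") auto

lemma prox_fin:
  assumes "s > 0" "g 0 = 0" "\<forall>t. g t \<ge> 0" "u \<in> prox s g q"
  shows "g u \<noteq> \<infinity>"
proof
  assume "g u = \<infinity>"
  then have e: "ereal ((u - q)\<^sup>2 / 2) + ereal s * g u = \<infinity>" using assms(1) by simp
  have "ereal ((u - q)\<^sup>2 / 2) + ereal s * g u \<le> ereal ((0 - q)\<^sup>2 / 2) + ereal s * g 0"
    using assms(4) unfolding prox_def by blast
  then have "(\<infinity>::ereal) \<le> ereal ((0 - q)\<^sup>2 / 2)" using e assms(2) by simp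
  then show False by simp
qed

lemma prox_real:
  assumes "s > 0" "\<forall>t. g t \<ge> 0" "u \<in> prox s g q" "g u \<noteq> \<infinity>" "g v \<noteq> \<infinity>"
  shows "(u - q)\<^sup>2 / 2 + s * greal g u \<le> (v - q)\<^sup>2 / 2 + s * greal g v"
proof -
  have "ereal ((u - q)\<^sup>2 / 2) + ereal s * g u \<le> ereal ((v - q)\<^sup>2 / 2) + ereal s * g v"
    using assms(3) unfolding prox_def by blast
  then show ?thesis
    using g_ereal[of g u] g_ereal[of g v] assms by (metis ereal_less_eq(3) plus_ereal.simps(1) times_ereal.simps(1))
qed



lemma gap_c:
  assumes g0: "g 0 = 0" and nn: "\<forall>t. g t \<ge> 0" and s: "s > 0" and w: "w > 0" "g w \<noteq> \<infinity>"
    and c: "c > 0" and d: "\<delta> > 0" and gc: "\<forall>t. 0 < t \<and> t < \<delta> \<longrightarrow> ereal c < g t"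
  shows "\<exists>\<delta>'>0. \<forall>u q. u > 0 \<and> u \<in> prox s g q \<longrightarrow> \<delta>' \<le> u"
proof -
  define G where "G = greal g w"
  have G0: "G \<ge> 0" using nn w unfolding G_def greal_def by (metis g_ereal ereal_less_eq(5) greal_def)
  define Q where "Q = (w\<^sup>2 + 2 * s * G) / w"
  have Q: "Q > 0" unfolding Q_def using w G0 s by (intro divide_pos_pos) (auto intro: add_pos_nonneg)
  define \<delta>' where "\<delta>' = min \<delta> (min (w/2) (s * c / Q))"
  have "\<delta>' > 0" unfolding \<delta>'_def using d w s c Q by auto
  moreover have "\<delta>' \<le> u" if u: "u > 0" "u \<in> prox s g q" for u q
  proof (rule ccontr)
    assume "\<not> \<delta>' \<le> u"
    then have u1: "u < \<delta>" "u < w/2" "u < s * c / Q" unfolding \<delta>'_def by auto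
    have gu: "ereal c < g u" using gc u u1 by auto
    have gfin: "g u \<noteq> \<infinity>" using prox_fin[OF s g0 nn u(2)] .
    have e: "g u = ereal (greal g u)" using g_ereal[of g u] gfin nn by blast
    have gc': "c < greal g u" using gu by (subst (asm) e) simp
    have i0: "(u - q)\<^sup>2 / 2 + s * greal g u \<le> q\<^sup>2 / 2 + s * greal g 0"
      using prox_real[OF s nn u(2) gfin, of 0] g0 by simp
    have iw: "(u - q)\<^sup>2 / 2 + s * greal g u \<le> (w - q)\<^sup>2 / 2 + s * G"
      using prox_real[OF s nn u(2) gfin w(2)] unfolding G_def .
    have g00: "greal g 0 = 0" using g0 unfolding greal_def by simp
    have sc: "s * c < s * greal g u" using gc' s by simp
    have ex: "(u - q)\<^sup>2 / 2 = u\<^sup>2/2 - u*q + q\<^sup>2/2" "(0 - q)\<^sup>2 = q\<^sup>2" by (simp_all add: power2_eq_square field_simps)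
    have "u\<^sup>2 \<ge> 0" by simp
    then have uq: "u * q > s * c" using i0 g00 sc u ex by (simp add: g00) (use zero_le_power2[of u] in linarith)
    have "0 < u*q" using uq mult_pos_pos[OF s c] by linarith
    then have q: "q > 0" using u by (simp add: zero_less_mult_iff)
    have ex2: "(w - q)\<^sup>2 / 2 = w\<^sup>2/2 - w*q + q\<^sup>2/2" by (simp_all add: power2_eq_square field_simps)
    have "s * c > 0" using s c by simp
    then have "q * (w - u) \<le> w\<^sup>2/2 + s * G" using iw sc ex ex2 by (simp add: algebra_simps) (use zero_le_power2[of u] in linarith)
    moreover have "q * (w/2) < q * (w - u)" using q u1 by simp
    ultimately have "q * w < w\<^sup>2 + 2 * s * G" by simp
    then have "q < Q" unfolding Q_def using w by (simp add: field_simps)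
    then have "u * q < u * Q" using u by simp
    moreover have "u * Q < s * c" using u1(3) Q by (simp add: field_simps)
    ultimately show False using uq by simp
  qed
  ultimately show ?thesis by blast
qed



lemma gap_concave:
  assumes s: "s > 0" and nn: "\<forall>t. g t \<ge> 0" and d: "\<delta> > 0"
    and H: "\<forall>t. 0 < t \<and> t < \<delta> \<longrightarrow> g t \<noteq> \<infinity> \<and> greal g differentiable (at t) \<and>
              deriv (greal g) differentiable (at t) \<and> 1 + s * gsecond g t < 0"
  shows "\<forall>u q. u > 0 \<and> u \<in> prox s g q \<longrightarrow> \<delta> \<le> u"
proof (intro allI impI)
  fix u q assume u: "u > 0 \<and> u \<in> prox s g q"
  show "\<delta> \<le> u"
  proof (rule ccontr)
    assume "\<not> \<delta> \<le> u"
    then have ud: "u < \<delta>" by simp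
    define t where "t = min u (\<delta> - u) / 2"
    have t: "t > 0" "0 < u - t" "u + t < \<delta>" using u ud unfolding t_def by (auto simp: min_def field_simps)
    define h where "h x = (x - q)\<^sup>2 / 2 + s * greal g x" for x
    define h' where "h' x = (x - q) + s * deriv (greal g) x" for x
    have dh: "DERIV h x :> h' x" if "0 < x" "x < \<delta>" for x
    proof -
      have "DERIV (greal g) x :> deriv (greal g) x"
        using H that DERIV_deriv_iff_real_differentiable by blast
      then show ?thesis unfolding h_def h'_def
        by (auto intro!: derivative_eq_intros)
    qed
    have dh': "DERIV h' x :> 1 + s * gsecond g x" if "0 < x" "x < \<delta>" for x
    proof -
      have "DERIV (deriv (greal g)) x :> gsecond g x"
        using H that DERIV_deriv_iff_real_differentiable unfolding gsecond_def by blast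
      then show ?thesis unfolding h'_def
        by (auto intro!: derivative_eq_intros)
    qed
    obtain \<xi> where xi: "u < \<xi>" "\<xi> < u + t" "h (u + t) - h u = (u + t - u) * h' \<xi>"
      using MVT2[of u "u + t" h h'] dh t u by force
    obtain \<eta> where eta: "u - t < \<eta>" "\<eta> < u" "h u - h (u - t) = (u - (u - t)) * h' \<eta>"
      using MVT2[of "u - t" u h h'] dh t u ud by force
    obtain \<zeta> where ze: "\<eta> < \<zeta>" "\<zeta> < \<xi>" "h' \<xi> - h' \<eta> = (\<xi> - \<eta>) * (1 + s * gsecond g \<zeta>)"
      using MVT2[of \<eta> \<xi> h' "\<lambda>x. 1 + s * gsecond g x"] dh' xi eta t by force
    have neg: "h' \<xi> - h' \<eta> < 0"
      using ze xi eta t H by (simp add: mult_pos_neg)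
    have gu: "g u \<noteq> \<infinity>" using H u ud by auto
    have "h u \<le> h (u + t)" unfolding h_def using prox_real[OF s nn _ gu] u H t by auto
    then have "0 \<le> t * h' \<xi>" using xi by simp
    then have "h' \<xi> \<ge> 0" using t(1) by (simp add: zero_le_mult_iff)
    have "h u \<le> h (u - t)" unfolding h_def using prox_real[OF s nn _ gu] u H t ud by auto
    then have "t * h' \<eta> \<le> 0" using eta by simp
    then have "h' \<eta> \<le> 0" using t(1) by (simp add: mult_le_0_iff)
    show False using neg \<open>h' \<xi> \<ge> 0\<close> \<open>h' \<eta> \<le> 0\<close> by simp
  qed
qed



lemma sqb: "\<bar>y::real\<bar> \<le> 1 \<or> \<bar>y\<bar> \<le> y\<^sup>2"
proof (cases "\<bar>y\<bar> \<le> 1")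
  case False
  then have "\<bar>y\<bar> * 1 \<le> \<bar>y\<bar> * \<bar>y\<bar>" by (intro mult_left_mono) auto
  then show ?thesis by (simp add: power2_eq_square abs_mult_self_eq)
qed simp

lemma prox_nonzero_exists:
  assumes B: "assumptionB g" and s: "s > 0"
  shows "\<exists>u q. u \<noteq> 0 \<and> u \<in> prox s g q"
proof -
  have nn: "\<forall>t. g t \<ge> 0" and g0: "g 0 = 0" and sym: "\<forall>u. g (-u) = g u"
    and B2: "\<exists>u. u \<noteq> 0 \<and> g u < \<infinity>"
    and lsc: "\<forall>x X. X \<longlonglongrightarrow> x \<longrightarrow> g x \<le> liminf (\<lambda>k. g (X k))"
    using B unfolding assumptionB_def by auto
  have ge: "g t = ereal (greal g t)" if "g t \<noteq> \<infinity>" for t using g_ereal[of g t] that nn by blast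
  obtain w0 where w0: "w0 \<noteq> 0" "g w0 < \<infinity>" using B2 by auto
  have "g \<bar>w0\<bar> = g w0" using sym by (cases "w0 \<ge> 0") auto
  then have w': "\<bar>w0\<bar> > 0" "g \<bar>w0\<bar> \<noteq> \<infinity>" using w0 by auto
  define w where "w = \<bar>w0\<bar>"
  have w: "w > 0" "g w \<noteq> \<infinity>" using w' unfolding w_def by auto
  define G where "G = greal g w"
  have wG: "g w = ereal G" unfolding G_def using ge w by blast
  have G0: "G \<ge> 0" using wG nn by (metis ereal_less_eq(5))
  define q where "q = (w\<^sup>2 / 2 + s * G) / w + 1"
  define h where "h v = ereal ((v - q)\<^sup>2 / 2) + ereal s * g v" for v
  define Hr where "Hr v = (v - q)\<^sup>2 / 2 + s * greal g v" for v
  have hH: "h v = ereal (Hr v)" if "g v \<noteq> \<infinity>" for v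
    unfolding h_def Hr_def using ge[OF that] by (subst ge[OF that]) simp
  have hinf: "h v = \<infinity>" if "g v = \<infinity>" for v unfolding h_def using that s by simp
  have hw: "h w < h 0"
  proof -
    have "q * w = w\<^sup>2 / 2 + s * G + w" unfolding q_def using w by (simp add: field_simps)
    then have "(w - q)\<^sup>2 / 2 + s * G < (0 - q)\<^sup>2 / 2" using w
      by (simp add: power2_eq_square field_simps)
    then show ?thesis unfolding h_def using wG g0 by simp
  qed
  have hnn: "h v \<ge> 0" for v unfolding h_def using nn s by (simp add: ereal_zero_le_0_iff)
  define m where "m = (INF v. h v)"
  have mle: "m \<le> h v" for v unfolding m_def by (rule INF_lower) simp
  have m0: "m \<ge> 0" unfolding m_def by (rule INF_greatest) (use hnn in auto)
  have "h 0 < \<infinity>" unfolding h_def using g0 by simp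
  then have "m < \<infinity>" using mle[of w] hw by (meson le_less_trans less_trans)
  then obtain mr where mr: "m = ereal mr" "mr \<ge> 0" using m0 by (cases m) auto
  have "\<forall>n. \<exists>v. h v < ereal (mr + inverse (real (Suc n)))"
  proof
    fix n
    have "m < ereal (mr + inverse (real (Suc n)))" using mr by simp
    then show "\<exists>v. h v < ereal (mr + inverse (real (Suc n)))" unfolding m_def INF_less_iff by blast
  qed
  then obtain X where X: "\<And>n. h (X n) < ereal (mr + inverse (real (Suc n)))" by metis
  have Xf: "g (X n) \<noteq> \<infinity>" for n using X[of n] hinf by force
  have HX: "Hr (X n) < mr + inverse (real (Suc n))" for n using X[of n] hH[OF Xf] by simp
  have HX2: "mr \<le> Hr (X n)" for n using mle[of "X n"] hH[OF Xf] mr by simp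
  have bnd: "\<bar>X n - q\<bar> \<le> 2 * (mr + 1) + 1" for n
  proof -
    have "inverse (real (Suc n)) \<le> 1" by (simp add: inverse_le_1_iff)
    moreover have "s * greal g (X n) \<ge> 0" using nn s unfolding greal_def
      by (simp add: real_of_ereal_pos)
    ultimately have "(X n - q)\<^sup>2 / 2 \<le> mr + 1" using HX[of n] unfolding Hr_def by linarith
    moreover have "\<bar>X n - q\<bar> \<le> 1 \<or> \<bar>X n - q\<bar> \<le> (X n - q)\<^sup>2"
      using sqb[of "X n - q"] .
    ultimately show ?thesis using mr by auto
  qed
  have "bounded (range X)"
    unfolding bounded_iff
  proof (intro exI ballI)
    fix x assume "x \<in> range X"
    then obtain n where "x = X n" by auto
    then show "norm x \<le> \<bar>q\<bar> + (2 * (mr + 1) + 1)" using bnd[of n] by auto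
  qed
  then obtain l r where r: "strict_mono r" and lim: "(X \<circ> r) \<longlonglongrightarrow> l"
    using bounded_imp_convergent_subsequence by blast
  have limH: "(\<lambda>n. Hr (X (r n))) \<longlonglongrightarrow> mr"
  proof (rule tendsto_sandwich[where f="\<lambda>n. mr" and h="\<lambda>n. mr + inverse (real (Suc n))"])
    show "\<forall>\<^sub>F n in sequentially. mr \<le> Hr (X (r n))" using HX2 by simp
    have iv: "inverse (real (Suc (r n))) \<le> inverse (real (Suc n))" for n
      using seq_suble[OF r, of n] by (simp add: le_imp_inverse_le)
    have "Hr (X (r n)) \<le> mr + inverse (real (Suc n))" for n
      using HX[of "r n"] iv[of n] by linarith
    then show "\<forall>\<^sub>F n in sequentially. Hr (X (r n)) \<le> mr + inverse (real (Suc n))"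
      by simp
    show "(\<lambda>n. mr) \<longlonglongrightarrow> mr" by simp
    show "(\<lambda>n. mr + inverse (real (Suc n))) \<longlonglongrightarrow> mr"
      using tendsto_add[OF tendsto_const LIMSEQ_inverse_real_of_nat, of mr] by simp
  qed
  define Gs where "Gs = (mr - (l - q)\<^sup>2 / 2) / s"
  have limG: "(\<lambda>n. greal g (X (r n))) \<longlonglongrightarrow> Gs"
  proof -
    have eq: "greal g (X (r n)) = (Hr (X (r n)) - (X (r n) - q)\<^sup>2 / 2) / s" for n
      unfolding Hr_def using s by simp
    have "(\<lambda>n. (Hr (X (r n)) - (X (r n) - q)\<^sup>2 / 2) / s) \<longlonglongrightarrow> (mr - (l - q)\<^sup>2 / 2) / s"
      using lim limH s unfolding comp_def by (auto intro!: tendsto_intros)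
    then show ?thesis unfolding Gs_def eq .
  qed
  have "g l \<le> liminf (\<lambda>n. g (X (r n)))" using lsc lim unfolding comp_def by blast
  also have "(\<lambda>n. g (X (r n))) = (\<lambda>n. ereal (greal g (X (r n))))" using ge Xf by auto
  also have "liminf \<dots> = ereal Gs"
    by (rule lim_imp_Liminf) (use limG in auto)
  finally have gl: "g l \<le> ereal Gs" .
  have "h l \<le> ereal ((l - q)\<^sup>2 / 2) + ereal s * ereal Gs"
    unfolding h_def using gl s by (intro add_left_mono ereal_mult_left_mono) auto
  also have "\<dots> = m" using s mr unfolding Gs_def by simp
  finally have hl: "h l \<le> m" .
  have "l \<in> prox s g q" unfolding prox_def using hl mle unfolding h_def by (blast intro: order.trans)
  moreover have "l \<noteq> 0"
  proof
    assume "l = 0"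
    then have "h 0 \<le> h w" using hl mle[of w] by simp
    then show False using hw by simp
  qed
  ultimately show ?thesis by blast
qed



lemma gap_pos:
  assumes B: "assumptionB g" and s: "s > 0" "s > s0 g"
  shows "\<exists>\<delta>>0. \<forall>u q. u > 0 \<and> u \<in> prox s g q \<longrightarrow> \<delta> \<le> u"
proof -
  have nn: "\<forall>t. g t \<ge> 0" and g0: "g 0 = 0" and sym: "\<forall>u. g (-u) = g u"
    and B2: "\<exists>u. u \<noteq> 0 \<and> g u < \<infinity>" and B3: "B3a g \<or> B3b g \<or> B3c g"
    using B unfolding assumptionB_def by auto
  show ?thesis
  proof (cases "B3c g")
    case True
    then have "0 < Liminf (at_right 0) g" unfolding B3c_def by simp
    then obtain c where c: "0 < ereal c" "ereal c < Liminf (at_right 0) g"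
      using ereal_dense2 by blast
    have "eventually (\<lambda>x. ereal c < g x) (at_right 0)" using less_LiminfD[OF c(2)] .
    then obtain b where b: "b > 0" "\<forall>y>0. y < b \<longrightarrow> ereal c < g y"
      unfolding eventually_at_right_field by auto
    obtain w0 where w0: "w0 \<noteq> 0" "g w0 < \<infinity>" using B2 by auto
    have "g \<bar>w0\<bar> = g w0" using sym by (cases "w0 \<ge> 0") auto
    then have w: "\<bar>w0\<bar> > 0" "g \<bar>w0\<bar> \<noteq> \<infinity>" using w0 by auto
    have c0: "c > 0" using c(1) by simp
    show ?thesis by (rule gap_c[OF g0 nn s(1) w c0 b(1)]) (use b(2) in blast)
  next
    case nc: False
    obtain \<epsilon> where e: "\<epsilon> > 0" and td: "\<forall>u\<in>{0<..<\<epsilon>}.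
      \<bar>g u\<bar> \<noteq> \<infinity> \<and> greal g differentiable (at u) \<and> deriv (greal g) differentiable (at u)"
      using B3 nc unfolding B3a_def B3b_def twice_diff_near0_def by blast
    have ev: "eventually (\<lambda>x. 1 + s * gsecond g x < 0) (at_right 0)"
    proof (cases "B3b g")
      case True
      then have "filterlim (gsecond g) at_bot (at_right 0)" unfolding B3b_def by simp
      then have "eventually (\<lambda>x. gsecond g x \<le> -1/s - 1) (at_right 0)"
        unfolding filterlim_at_bot by blast
      then show ?thesis
      proof (rule eventually_mono)
        fix x assume "gsecond g x \<le> -1/s - 1"
        then have "s * gsecond g x \<le> s * (-1/s - 1)" using s by (simp add: mult_left_mono)
        also have "\<dots> = -1 - s" using s by (simp add: field_simps)
        finally show "1 + s * gsecond g x < 0" using s by simp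
      qed
    next
      case False
      then have a: "B3a g" using B3 nc by auto
      define lsup where "lsup = Limsup (at_right 0) (\<lambda>u. ereal (gsecond g u))"
      have "lsup \<in> {-\<infinity><..<0}" using a unfolding B3a_def lsup_def by simp
      then obtain l where l: "lsup = ereal l" "l < 0" by (cases lsup) auto
      have "s0 g = - 1 / l" unfolding s0_def using nc False l lsup_def by simp
      then have "s > - 1 / l" using s by simp
      then have "s * (-l) > 1" using l by (simp add: field_simps)
      then have ll: "l < -1/s" using s by (simp add: field_simps)
      define l' where "l' = (l + (-1/s)) / 2"
      have l': "l < l'" "l' < -1/s" using ll unfolding l'_def by auto
      have "eventually (\<lambda>x. ereal (gsecond g x) < ereal l') (at_right 0)"
        by (rule Limsup_lessD) (use l l' lsup_def in simp)
      then show ?thesis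
      proof (rule eventually_mono)
        fix x assume "ereal (gsecond g x) < ereal l'"
        then have "gsecond g x < l'" by simp
        then have "gsecond g x < -1/s" using l' by simp
        then have "s * gsecond g x < s * (-1/s)" using mult_strict_left_mono s(1) by blast
        then show "1 + s * gsecond g x < 0" using s by simp
      qed
    qed
    then obtain b where b: "b > 0" "\<forall>y>0. y < b \<longrightarrow> 1 + s * gsecond g y < 0"
      unfolding eventually_at_right_field by auto
    define \<delta> where "\<delta> = min b \<epsilon>"
    have "\<delta> > 0" unfolding \<delta>_def using b e by simp
    moreover have "\<forall>t. 0 < t \<and> t < \<delta> \<longrightarrow> g t \<noteq> \<infinity> \<and> greal g differentiable (at t) \<and>
              deriv (greal g) differentiable (at t) \<and> 1 + s * gsecond g t < 0"
    proof (intro allI impI)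
      fix t assume t: "0 < t \<and> t < \<delta>"
      then have "t \<in> {0<..<\<epsilon>}" "t < b" unfolding \<delta>_def by auto
      then show "g t \<noteq> \<infinity> \<and> greal g differentiable (at t) \<and>
              deriv (greal g) differentiable (at t) \<and> 1 + s * gsecond g t < 0"
        using td b(2) t by fastforce
    qed
    ultimately show ?thesis using gap_concave[OF s(1) nn] by blast
  qed
qed

lemma gap_abs:
  assumes B: "assumptionB g" and s: "s > 0" "s > s0 g"
  shows "\<exists>\<delta>>0. \<forall>u q. u \<noteq> 0 \<and> u \<in> prox s g q \<longrightarrow> \<delta> \<le> \<bar>u\<bar>"
proof -
  obtain \<delta> where d: "\<delta> > 0" "\<forall>u q. u > 0 \<and> u \<in> prox s g q \<longrightarrow> \<delta> \<le> u"
    using gap_pos[OF assms] by blast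
  have sym: "\<forall>u. g (-u) = g u" using B unfolding assumptionB_def by auto
  have "\<delta> \<le> \<bar>u\<bar>" if "u \<noteq> 0" "u \<in> prox s g q" for u q
  proof (cases "u > 0")
    case True then show ?thesis using d that by auto
  next
    case False
    then have "-u > 0" using that by simp
    moreover have "-u \<in> prox s g (-q)" using prox_neg[OF sym that(2)] .
    ultimately have "\<delta> \<le> -u" using d by blast
    then show ?thesis using False by simp
  qed
  then show ?thesis using d by blast
qed



lemma g_borel:
  fixes g :: "real \<Rightarrow> ereal"
  assumes lsc: "\<forall>x X. X \<longlonglongrightarrow> x \<longrightarrow> g x \<le> liminf (\<lambda>k. g (X k))"
  shows "g \<in> borel_measurable borel"
proof (rule borel_measurableI_le)
  fix y
  have "closed {x. g x \<le> y}" unfolding closed_sequential_limits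
  proof (intro allI impI)
    fix X l assume h: "(\<forall>n. X n \<in> {x. g x \<le> y}) \<and> X \<longlonglongrightarrow> l"
    then have "g l \<le> liminf (\<lambda>k. g (X k))" using lsc by blast
    also have "\<dots> \<le> limsup (\<lambda>k. g (X k))" by (rule Liminf_le_Limsup) simp
    also have "\<dots> \<le> y" by (rule Limsup_bounded) (use h in simp)
    finally show "l \<in> {x. g x \<le> y}" by simp
  qed
  then show "{x \<in> space borel. g x \<le> y} \<in> sets borel" by simp
qed

lemma greal_nn: "\<forall>t. g t \<ge> 0 \<Longrightarrow> greal g t \<ge> 0"
  unfolding greal_def by (simp add: real_of_ereal_pos)

lemma L2_meas: "u \<in> L2 \<Omega> \<Longrightarrow> u \<in> borel_measurable (lebesgue_on \<Omega>)"
  unfolding L2_def by simp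

lemma L2_int: "u \<in> L2 \<Omega> \<Longrightarrow> integrable (lebesgue_on \<Omega>) (\<lambda>x. (u x)\<^sup>2)"
  unfolding L2_def by simp

lemma fin_meas:
  assumes "\<Omega> \<in> sets lebesgue" "emeasure lebesgue \<Omega> < \<infinity>"
  shows "finite_measure (lebesgue_on \<Omega>)"
proof (rule finite_measureI)
  have "emeasure (lebesgue_on \<Omega>) \<Omega> = emeasure lebesgue \<Omega>"
    using assms(1) by (simp add: emeasure_restrict_space)
  then show "emeasure (lebesgue_on \<Omega>) (space (lebesgue_on \<Omega>)) \<noteq> \<infinity>" using assms(2) by simp
qed

lemma int_prod:
  assumes "u \<in> L2 \<Omega>" "v \<in> L2 \<Omega>"
  shows "integrable (lebesgue_on \<Omega>) (\<lambda>x. u x * v x)"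
proof (rule Bochner_Integration.integrable_bound)
  show "integrable (lebesgue_on \<Omega>) (\<lambda>x. (u x)\<^sup>2 + (v x)\<^sup>2)"
    using L2_int[OF assms(1)] L2_int[OF assms(2)] by simp
  show "(\<lambda>x. u x * v x) \<in> borel_measurable (lebesgue_on \<Omega>)"
    using L2_meas[OF assms(1)] L2_meas[OF assms(2)] by simp
  show "AE x in lebesgue_on \<Omega>. norm (u x * v x) \<le> norm ((u x)\<^sup>2 + (v x)\<^sup>2)"
  proof (intro AE_I2)
    fix x
    have "2 * \<bar>u x * v x\<bar> \<le> (u x)\<^sup>2 + (v x)\<^sup>2"
      using sum_squares_bound[of "\<bar>u x\<bar>" "\<bar>v x\<bar>"] by (simp add: abs_mult power2_eq_square)
    then show "norm (u x * v x) \<le> norm ((u x)\<^sup>2 + (v x)\<^sup>2)" by simp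
  qed
qed

lemma L2_diff:
  assumes "u \<in> L2 \<Omega>" "v \<in> L2 \<Omega>"
  shows "(\<lambda>x. u x - v x) \<in> L2 \<Omega>"
proof -
  have "integrable (lebesgue_on \<Omega>) (\<lambda>x. (u x)\<^sup>2 - 2 * (u x * v x) + (v x)\<^sup>2)"
    using L2_int[OF assms(1)] L2_int[OF assms(2)] int_prod[OF assms] by simp
  moreover have "(\<lambda>x. (u x)\<^sup>2 - 2 * (u x * v x) + (v x)\<^sup>2) = (\<lambda>x. (u x - v x)\<^sup>2)"
    by (simp add: power2_eq_square algebra_simps)
  ultimately show ?thesis unfolding L2_def using L2_meas[OF assms(1)] L2_meas[OF assms(2)] by simp
qed

lemma L2norm_sq: "(L2norm \<Omega> u)\<^sup>2 = (\<integral>x. (u x)\<^sup>2 \<partial>(lebesgue_on \<Omega>))"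
  unfolding L2norm_def by (simp add: integral_nonneg_AE)

lemma pg_formula:
  assumes a: "a \<in> L2 \<Omega>" and d: "Df a \<in> L2 \<Omega>" and u: "u \<in> L2 \<Omega>"
    and fin: "AE x in lebesgue_on \<Omega>. g (u x) \<noteq> \<infinity>"
    and gi: "integrable (lebesgue_on \<Omega>) (\<lambda>x. greal g (u x))"
    and nn: "\<forall>t. g t \<ge> 0"
  shows "pg_obj \<Omega> f Df g L a u = ereal (f a + (\<integral>x. Df a x * (u x - a x) + L/2 * (u x - a x)\<^sup>2 + greal g (u x) \<partial>lebesgue_on \<Omega>))"
proof -
  have ua: "(\<lambda>x. u x - a x) \<in> L2 \<Omega>" by (rule L2_diff[OF u a])
  have i1: "integrable (lebesgue_on \<Omega>) (\<lambda>x. Df a x * (u x - a x))" using int_prod[OF d ua] .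
  have i2: "integrable (lebesgue_on \<Omega>) (\<lambda>x. (u x - a x)\<^sup>2)" using L2_int[OF ua] .
  have nnint: "(\<integral>\<^sup>+ x. e2ennreal (g (u x)) \<partial>lebesgue_on \<Omega>) = ennreal (\<integral>x. greal g (u x) \<partial>lebesgue_on \<Omega>)"
  proof -
    have "(\<integral>\<^sup>+ x. e2ennreal (g (u x)) \<partial>lebesgue_on \<Omega>) = (\<integral>\<^sup>+ x. ennreal (greal g (u x)) \<partial>lebesgue_on \<Omega>)"
    proof (rule nn_integral_cong_AE)
      show "AE x in lebesgue_on \<Omega>. e2ennreal (g (u x)) = ennreal (greal g (u x))"
        using fin by eventually_elim (metis g_ereal nn e2ennreal_ereal)
    qed
    also have "\<dots> = ennreal (\<integral>x. greal g (u x) \<partial>lebesgue_on \<Omega>)"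
      by (rule nn_integral_eq_integral[OF gi]) (use greal_nn[OF nn] in simp)
    finally show ?thesis .
  qed
  have "(\<integral>x. Df a x * (u x - a x) + L/2 * (u x - a x)\<^sup>2 + greal g (u x) \<partial>lebesgue_on \<Omega>)
      = (\<integral>x. Df a x * (u x - a x) \<partial>lebesgue_on \<Omega>) + L/2 * (\<integral>x. (u x - a x)\<^sup>2 \<partial>lebesgue_on \<Omega>)
        + (\<integral>x. greal g (u x) \<partial>lebesgue_on \<Omega>)"
    using i1 i2 gi by simp
  moreover have "(\<integral>x. greal g (u x) \<partial>lebesgue_on \<Omega>) \<ge> 0"
    by (rule integral_nonneg_AE) (use greal_nn[OF nn] in simp)
  ultimately show ?thesis
    unfolding pg_obj_def L2inner_def L2norm_sq nnint by simp
qed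



lemma alg_key:
  fixes L t a d G :: real
  assumes "L > 0"
  shows "d * (t - a) + L/2 * (t - a)\<^sup>2 + G = L * ((t - (a - d / L))\<^sup>2 / 2 + (1/L) * G) - d\<^sup>2 / (2 * L)"
  using assms by (simp add: power2_eq_square field_simps)

lemma prox_ae:
  fixes \<Omega> :: "'a::euclidean_space set" and g :: "real \<Rightarrow> ereal"
  assumes Om: "\<Omega> \<in> sets lebesgue" "emeasure lebesgue \<Omega> < \<infinity>"
    and B: "assumptionB g" and L: "L > 0"
    and a: "a \<in> L2 \<Omega>" and d: "Df a \<in> L2 \<Omega>" and b: "b \<in> L2 \<Omega>"
    and min: "\<forall>v\<in>L2 \<Omega>. pg_obj \<Omega> f Df g L a b \<le> pg_obj \<Omega> f Df g L a v"
  shows "AE x in lebesgue_on \<Omega>. b x \<in> prox (1/L) g (a x - Df a x / L)"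
proof -
  have nn: "\<forall>t. g t \<ge> 0" and g0: "g 0 = 0"
    and lsc: "\<forall>x X. X \<longlonglongrightarrow> x \<longrightarrow> g x \<le> liminf (\<lambda>k. g (X k))"
    using B unfolding assumptionB_def by auto
  have gb[measurable]: "g \<in> borel_measurable borel" using g_borel[OF lsc] .
  interpret finite_measure "lebesgue_on \<Omega>" using fin_meas[OF Om] .
  note [measurable] = L2_meas[OF a] L2_meas[OF d] L2_meas[OF b]
  have z: "(\<lambda>x. 0::real) \<in> L2 \<Omega>" unfolding L2_def by simp
  have "pg_obj \<Omega> f Df g L a b \<le> pg_obj \<Omega> f Df g L a (\<lambda>x. 0)" using min z by blast
  moreover have "pg_obj \<Omega> f Df g L a (\<lambda>x. 0) < \<infinity>" unfolding pg_obj_def using g0 by (simp add: e2ennreal_neg)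
  ultimately have "pg_obj \<Omega> f Df g L a b < \<infinity>" by (rule le_less_trans)
  then have binf: "(\<integral>\<^sup>+ x. e2ennreal (g (b x)) \<partial>lebesgue_on \<Omega>) \<noteq> \<infinity>"
    unfolding pg_obj_def by auto
  have "AE x in lebesgue_on \<Omega>. e2ennreal (g (b x)) \<noteq> \<infinity>"
    by (rule nn_integral_PInf_AE[OF _ binf]) measurable
  then have bfin: "AE x in lebesgue_on \<Omega>. g (b x) \<noteq> \<infinity>"
    by eventually_elim auto
  have ge: "g t = ereal (greal g t)" if "g t \<noteq> \<infinity>" for t using g_ereal[of g t] that nn by blast
  have gnn: "greal g t \<ge> 0" for t using greal_nn[OF nn] .
  have gm[measurable]: "greal g \<in> borel_measurable borel" unfolding greal_def by measurable
  have bint: "integrable (lebesgue_on \<Omega>) (\<lambda>x. greal g (b x))"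
  proof (rule integrableI_nonneg)
    show "(\<lambda>x. greal g (b x)) \<in> borel_measurable (lebesgue_on \<Omega>)" by measurable
    show "AE x in lebesgue_on \<Omega>. 0 \<le> greal g (b x)" using gnn by simp
    have "(\<integral>\<^sup>+ x. ennreal (greal g (b x)) \<partial>lebesgue_on \<Omega>) = (\<integral>\<^sup>+ x. e2ennreal (g (b x)) \<partial>lebesgue_on \<Omega>)"
      by (rule nn_integral_cong_AE) (use bfin in \<open>eventually_elim, metis ge e2ennreal_ereal\<close>)
    then show "(\<integral>\<^sup>+ x. ennreal (greal g (b x)) \<partial>lebesgue_on \<Omega>) < \<infinity>" using binf by (simp add: top.not_eq_extremum)
  qed
  define s where "s = 1 / L"
  define q where "q x = a x - Df a x / L" for x
  define \<psi> where "\<psi> x t = ereal ((t - q x)\<^sup>2 / 2) + ereal s * g t" for x t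
  define F where "F t x = Df a x * (t - a x) + L/2 * (t - a x)\<^sup>2 + greal g t" for t x
  have key: "F t x < F t' x" if "g t \<noteq> \<infinity>" "g t' \<noteq> \<infinity>" "\<psi> x t < \<psi> x t'" for t t' x
  proof -
    have "\<psi> x t = ereal ((t - q x)\<^sup>2 / 2 + s * greal g t)" unfolding \<psi>_def by (subst ge[OF that(1)]) simp
    moreover have "\<psi> x t' = ereal ((t' - q x)\<^sup>2 / 2 + s * greal g t')" unfolding \<psi>_def by (subst ge[OF that(2)]) simp
    ultimately have "(t - q x)\<^sup>2 / 2 + s * greal g t < (t' - q x)\<^sup>2 / 2 + s * greal g t'" using that(3) by simp
    then have "L * ((t - q x)\<^sup>2 / 2 + s * greal g t) < L * ((t' - q x)\<^sup>2 / 2 + s * greal g t')"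
      using L by simp
    then show ?thesis unfolding F_def q_def s_def alg_key[OF L] by simp
  qed
  have pb: "pg_obj \<Omega> f Df g L a b = ereal (f a + (\<integral>x. F (b x) x \<partial>lebesgue_on \<Omega>))"
    unfolding F_def by (rule pg_formula[where Df=Df and g=g and u=b and a=a and \<Omega>=\<Omega>, OF a d b bfin bint nn])
  have Pnull: "AE x in lebesgue_on \<Omega>. \<not> (\<psi> x w < \<psi> x (b x))" if w: "g w \<noteq> \<infinity>" for w
  proof -
    define P where "P = {x \<in> \<Omega>. \<psi> x w < \<psi> x (b x)}"
    have Pm: "P \<in> sets (lebesgue_on \<Omega>)"
    proof -
      have "{x \<in> space (lebesgue_on \<Omega>). \<psi> x w < \<psi> x (b x)} \<in> sets (lebesgue_on \<Omega>)"
        unfolding \<psi>_def q_def by measurable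
      then show ?thesis unfolding P_def by simp
    qed
    define v where "v x = (if x \<in> P then w else b x)" for x
    have vm[measurable]: "v \<in> borel_measurable (lebesgue_on \<Omega>)"
      unfolding v_def by (rule measurable_If_set) (use Pm in auto)
    have vL2: "v \<in> L2 \<Omega>"
    proof -
      have "integrable (lebesgue_on \<Omega>) (\<lambda>x. (v x)\<^sup>2)"
      proof (rule Bochner_Integration.integrable_bound)
        show "integrable (lebesgue_on \<Omega>) (\<lambda>x. w\<^sup>2 + (b x)\<^sup>2)" using L2_int[OF b] by simp
        show "(\<lambda>x. (v x)\<^sup>2) \<in> borel_measurable (lebesgue_on \<Omega>)" by measurable
        show "AE x in lebesgue_on \<Omega>. norm ((v x)\<^sup>2) \<le> norm (w\<^sup>2 + (b x)\<^sup>2)"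
          by (intro AE_I2) (simp add: v_def)
      qed
      then show ?thesis unfolding L2_def by simp
    qed
    have vfin: "AE x in lebesgue_on \<Omega>. g (v x) \<noteq> \<infinity>"
      using bfin by eventually_elim (simp add: v_def w)
    have vint: "integrable (lebesgue_on \<Omega>) (\<lambda>x. greal g (v x))"
    proof (rule Bochner_Integration.integrable_bound)
      show "integrable (lebesgue_on \<Omega>) (\<lambda>x. greal g w + greal g (b x))" using bint by simp
      show "(\<lambda>x. greal g (v x)) \<in> borel_measurable (lebesgue_on \<Omega>)" by measurable
      show "AE x in lebesgue_on \<Omega>. norm (greal g (v x)) \<le> norm (greal g w + greal g (b x))"
        by (intro AE_I2) (use gnn in \<open>simp add: v_def\<close>)
    qed
    have pv: "pg_obj \<Omega> f Df g L a v = ereal (f a + (\<integral>x. F (v x) x \<partial>lebesgue_on \<Omega>))"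
      unfolding F_def by (rule pg_formula[where Df=Df and g=g and u=v and a=a and \<Omega>=\<Omega>, OF a d vL2 vfin vint nn])
    have "pg_obj \<Omega> f Df g L a b \<le> pg_obj \<Omega> f Df g L a v" using min vL2 by blast
    then have le: "(\<integral>x. F (b x) x \<partial>lebesgue_on \<Omega>) \<le> (\<integral>x. F (v x) x \<partial>lebesgue_on \<Omega>)"
      unfolding pb pv by simp
    have Fint: "integrable (lebesgue_on \<Omega>) (\<lambda>x. F (u x) x)" if "u \<in> L2 \<Omega>" "integrable (lebesgue_on \<Omega>) (\<lambda>x. greal g (u x))" for u
    proof -
      have ua: "(\<lambda>x. u x - a x) \<in> L2 \<Omega>" by (rule L2_diff[OF that(1) a])
      show ?thesis unfolding F_def using int_prod[OF d ua] L2_int[OF ua] that(2) by simp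
    qed
    define h where "h x = F (b x) x - F (v x) x" for x
    have hint: "integrable (lebesgue_on \<Omega>) h" unfolding h_def using Fint[OF b bint] Fint[OF vL2 vint] by simp
    have hnn: "AE x in lebesgue_on \<Omega>. 0 \<le> h x"
      using bfin
    proof eventually_elim
      case (elim x)
      show ?case
      proof (cases "x \<in> P")
        case True
        then have "\<psi> x w < \<psi> x (b x)" unfolding P_def by simp
        then have "F w x < F (b x) x" using key w elim by blast
        then show ?thesis unfolding h_def v_def using True by simp
      qed (simp add: h_def v_def)
    qed
    have "integral\<^sup>L (lebesgue_on \<Omega>) h = (\<integral>x. F (b x) x \<partial>lebesgue_on \<Omega>) - (\<integral>x. F (v x) x \<partial>lebesgue_on \<Omega>)"
      unfolding h_def using Fint[OF b bint] Fint[OF vL2 vint] by simp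
    moreover have "integral\<^sup>L (lebesgue_on \<Omega>) h \<ge> 0" using integral_nonneg_AE[OF hnn] .
    ultimately have "integral\<^sup>L (lebesgue_on \<Omega>) h = 0" using le by simp
    then have h0: "AE x in lebesgue_on \<Omega>. h x = 0" using integral_nonneg_eq_0_iff_AE[OF hint hnn] by simp
    show ?thesis
      using h0 bfin AE_space[of "lebesgue_on \<Omega>"]
    proof eventually_elim
      case (elim x)
      show ?case
      proof
        assume lt: "\<psi> x w < \<psi> x (b x)"
        then have "F w x < F (b x) x" using key w elim by blast
        moreover have "x \<in> P" using lt elim unfolding P_def by auto
        ultimately have "h x > 0" unfolding h_def v_def by simp
        then show False using elim by simp
      qed
    qed
  qed
  define S where "S = {p :: real \<times> real. g (fst p) \<noteq> \<infinity> \<and> snd p = greal g (fst p)}"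
  obtain T where T: "countable T" "T \<subseteq> S" "S \<subseteq> closure T" using separable by blast
  have "AE x in lebesgue_on \<Omega>. \<forall>p\<in>T. \<not> (\<psi> x (fst p) < \<psi> x (b x))"
    using T(1) T(2) Pnull unfolding S_def by (subst AE_ball_countable) auto
  then show ?thesis
    using bfin
  proof eventually_elim
    case (elim x)
    have "\<psi> x (b x) \<le> \<psi> x t" for t
    proof (cases "g t = \<infinity>")
      case True
      then show ?thesis unfolding \<psi>_def s_def using L by simp
    next
      case False
      then have "(t, greal g t) \<in> closure T" using T(3) unfolding S_def by auto
      then obtain Y where Y: "\<And>n. Y n \<in> T" "Y \<longlonglongrightarrow> (t, greal g t)"
        unfolding closure_sequential by blast
      have Yf: "g (fst (Y n)) \<noteq> \<infinity>" "snd (Y n) = greal g (fst (Y n))" for n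
        using Y(1) T(2) unfolding S_def by auto
      have eqY: "\<psi> x (fst (Y n)) = ereal ((fst (Y n) - q x)\<^sup>2 / 2 + s * snd (Y n))" for n
        unfolding \<psi>_def Yf(2) by (subst ge[OF Yf(1)]) simp
      have eqt: "\<psi> x t = ereal ((t - q x)\<^sup>2 / 2 + s * greal g t)"
        unfolding \<psi>_def by (subst ge[OF False]) simp
      have lim: "(\<lambda>n. ereal ((fst (Y n) - q x)\<^sup>2 / 2 + s * snd (Y n))) \<longlonglongrightarrow> ereal ((t - q x)\<^sup>2 / 2 + s * greal g t)"
        using tendsto_fst[OF Y(2)] tendsto_snd[OF Y(2)] by (auto intro!: tendsto_intros)
      have all: "\<psi> x (b x) \<le> ereal ((fst (Y n) - q x)\<^sup>2 / 2 + s * snd (Y n))" for n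
        using elim(1) Y(1)[of n] eqY[of n] by (metis not_less)
      show ?thesis unfolding eqt by (rule LIMSEQ_le_const[OF lim]) (use all in blast)
    qed
    then show ?case unfolding prox_def \<psi>_def q_def s_def by simp
  qed
qed



theorem lemma4p2:
  fixes \<Omega> :: "'a::euclidean_space set"
    and f :: "('a \<Rightarrow> real) \<Rightarrow> real" and Df :: "('a \<Rightarrow> real) \<Rightarrow> ('a \<Rightarrow> real)" and Lf :: real
    and g :: "real \<Rightarrow> ereal" and L :: real and u :: "nat \<Rightarrow> 'a \<Rightarrow> real"
  assumes "\<Omega> \<in> sets lebesgue" and "emeasure lebesgue \<Omega> < \<infinity>"
    and "assumptionA \<Omega> f Df Lf"
    and "assumptionB g"
    and "L > 0" and "1 / L > s0 g"
    and "prox_grad_iterates \<Omega> f Df g L u"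
  shows "(\<forall>k\<ge>1. \<forall>p::real. p \<ge> 1 \<longrightarrow>
            (\<integral>\<^sup>+ x. ennreal (\<bar>u (Suc k) x - u k x\<bar> powr p) \<partial>(lebesgue_on \<Omega>))
            \<ge> ennreal (\<sigma> g (1 / L) powr p) *
               (\<integral>\<^sup>+ x. ennreal \<bar>chi \<Omega> (u k) x - chi \<Omega> (u (Suc k)) x\<bar> \<partial>(lebesgue_on \<Omega>)))
         \<and> \<sigma> g (1 / L) > 0"
proof -
  note Om = assms(1,2) and A = assms(3) and B = assms(4) and L = assms(5) and sL = assms(6)
    and it = assms(7)
  have s: "1 / L > 0" using L by simp
  define Sset where "Sset = {\<bar>v\<bar> | v. v \<noteq> 0 \<and> (\<exists>q. v \<in> prox (1/L) g q)}"
  have sig: "\<sigma> g (1/L) = Inf Sset" unfolding \<sigma>_def Sset_def by simp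
  obtain \<delta> where d: "\<delta> > 0" "\<forall>v q. v \<noteq> 0 \<and> v \<in> prox (1/L) g q \<longrightarrow> \<delta> \<le> \<bar>v\<bar>"
    using gap_abs[OF B s sL] by blast
  obtain v0 q0 where v0: "v0 \<noteq> 0" "v0 \<in> prox (1/L) g q0" using prox_nonzero_exists[OF B s] by blast
  have ne: "Sset \<noteq> {}" unfolding Sset_def using v0 by blast
  have "\<delta> \<le> Inf Sset" by (rule cInf_greatest[OF ne]) (use d in \<open>auto simp: Sset_def\<close>)
  then have sigpos: "\<sigma> g (1/L) > 0" using d sig by simp
  have siglow: "\<sigma> g (1/L) \<le> \<bar>v\<bar>" if "v \<noteq> 0" "v \<in> prox (1/L) g q" for v q
  proof -
    have "\<bar>v\<bar> \<in> Sset" unfolding Sset_def using that by blast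
    moreover have "bdd_below Sset" unfolding Sset_def by (rule bdd_belowI[of _ 0]) auto
    ultimately show ?thesis unfolding sig by (rule cInf_lower)
  qed
  have uL2: "u k \<in> L2 \<Omega>" for k
    using it unfolding prox_grad_iterates_def by (cases k) auto
  have DL2: "Df (u k) \<in> L2 \<Omega>" for k
    using A uL2 unfolding assumptionA_def by blast
  have step: "AE x in lebesgue_on \<Omega>. u (Suc j) x \<in> prox (1/L) g (u j x - Df (u j) x / L)" for j
    by (rule prox_ae[where Df=Df and a="u j" and b="u (Suc j)" and f=f, OF Om B L uL2 DL2 uL2]) (use it in \<open>simp add: prox_grad_iterates_def\<close>)
  have main: "(\<integral>\<^sup>+ x. ennreal (\<bar>u (Suc k) x - u k x\<bar> powr p) \<partial>(lebesgue_on \<Omega>))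
            \<ge> ennreal (\<sigma> g (1 / L) powr p) *
               (\<integral>\<^sup>+ x. ennreal \<bar>chi \<Omega> (u k) x - chi \<Omega> (u (Suc k)) x\<bar> \<partial>(lebesgue_on \<Omega>))"
    if k: "k \<ge> 1" and p: "p \<ge> 1" for k p
  proof -
    obtain j where j: "k = Suc j" using k by (cases k) auto
    note [measurable] = L2_meas[OF uL2[of k]] L2_meas[OF uL2[of "Suc k"]]
    have cm: "(\<lambda>x. ennreal \<bar>chi \<Omega> (u k) x - chi \<Omega> (u (Suc k)) x\<bar>) \<in> borel_measurable (lebesgue_on \<Omega>)"
    proof -
      have "{x \<in> space (lebesgue_on \<Omega>). u k x \<noteq> 0} \<in> sets (lebesgue_on \<Omega>)" by measurable
      moreover have "{x \<in> space (lebesgue_on \<Omega>). u (Suc k) x \<noteq> 0} \<in> sets (lebesgue_on \<Omega>)" by measurable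
      ultimately show ?thesis unfolding chi_def by simp
    qed
    have "ennreal (\<sigma> g (1 / L) powr p) * (\<integral>\<^sup>+ x. ennreal \<bar>chi \<Omega> (u k) x - chi \<Omega> (u (Suc k)) x\<bar> \<partial>(lebesgue_on \<Omega>))
        = (\<integral>\<^sup>+ x. ennreal (\<sigma> g (1 / L) powr p) * ennreal \<bar>chi \<Omega> (u k) x - chi \<Omega> (u (Suc k)) x\<bar> \<partial>(lebesgue_on \<Omega>))"
      by (rule nn_integral_cmult[OF cm, symmetric])
    also have "\<dots> \<le> (\<integral>\<^sup>+ x. ennreal (\<bar>u (Suc k) x - u k x\<bar> powr p) \<partial>(lebesgue_on \<Omega>))"
    proof (rule nn_integral_mono_AE)
      show "AE x in lebesgue_on \<Omega>. ennreal (\<sigma> g (1 / L) powr p) * ennreal \<bar>chi \<Omega> (u k) x - chi \<Omega> (u (Suc k)) x\<bar>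
           \<le> ennreal (\<bar>u (Suc k) x - u k x\<bar> powr p)"
        using step[of j] step[of k] AE_space[of "lebesgue_on \<Omega>"]
      proof eventually_elim
        case (elim x)
        have xO: "x \<in> \<Omega>" using elim by simp
        show ?case
        proof (cases "(u k x = 0) = (u (Suc k) x = 0)")
          case True
          then have "chi \<Omega> (u k) x - chi \<Omega> (u (Suc k)) x = 0" unfolding chi_def indicator_def using xO by simp
          then show ?thesis by simp
        next
          case False
          then have chi1: "\<bar>chi \<Omega> (u k) x - chi \<Omega> (u (Suc k)) x\<bar> = 1" unfolding chi_def indicator_def using xO by auto
          have "\<sigma> g (1/L) \<le> \<bar>u (Suc k) x - u k x\<bar>"
          proof (cases "u k x = 0")
            case True
            then have "u (Suc k) x \<noteq> 0" using False by simp
            then show ?thesis using siglow[OF _ elim(2)] True by simp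
          next
            case nz: False
            then have "u (Suc k) x = 0" using False by simp
            then show ?thesis using siglow[OF nz] elim(1) j by simp
          qed
          then have "\<sigma> g (1/L) powr p \<le> \<bar>u (Suc k) x - u k x\<bar> powr p"
            using sigpos p by (intro powr_mono2) auto
          then show ?thesis unfolding chi1 by (simp add: ennreal_leI)
        qed
      qed
    qed
    finally show ?thesis .
  qed
  show ?thesis using main sigpos by blast
qed


end
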